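(* Let $(X,Y,Z)$ be a random vector where $Y$ takes values in a countable set $\mathcal Y$ with $\mathbb P(Y\in\mathcal Y)=1$. Then $$0\le \mathrm{ETV}(X,Y,Z)\le 1 .$$ Moreover, when $\mathcal Y$ is finite, the upper bound $\mathrm{ETV}(X,Y,Z)=1$ is achieved when, conditional on $Z$, $X$ deterministically determines $Y$ (i.e. $Y$ is a measurable function of $(X,Z)$) and $\mathbb P(Y=y\mid Z)=1/|\mathcal Y|$ almost surely for all $y\in\mathcal Y$.
   Context: For distributions $\mathcal L_1,\mathcal L_2$ on the same space, $\mathrm{TV}(\mathcal L_1,\mathcal L_2)=\sup_A|\mathcal L_1(A)-\mathcal L_2(A)|$ (half the $L_1$ distance between densities/mass functions). The expected total variation is $$\mathrm{ETV}(X,Y,Z)=\frac{1}{1-1/|\mathcal Y|}\,\mathbb E\big[\mathrm{TV}\big(\mathcal L(Y\mid X,Z),\mathcal L(Y\mid Z)\big)\big],$$ where $|\mathcal Y|$ is the support size of $Y$; if $|\mathcal Y|=\infty$ the normalizing factor $\frac{1}{1-1/|\mathcal Y|}$ is replaced by $1$. Here $\mathcal L(\cdot\mid\cdot)$ denotes conditional distribution. *)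

theory Defs
  imports "HOL-Probability.Probability"
begin

definition gen_sigma :: "'a measure \<Rightarrow> ('a \<Rightarrow> 'b) \<Rightarrow> 'b measure \<Rightarrow> 'a measure" where
  "gen_sigma M W N = vimage_algebra (space M) W N"

definition cond_prob_pt :: "'a measure \<Rightarrow> 'a measure \<Rightarrow> ('a \<Rightarrow> 'y) \<Rightarrow> 'y \<Rightarrow> 'a \<Rightarrow> real" where
  "cond_prob_pt M F Y y = real_cond_exp M F (indicator {\<omega> \<in> space M. Y \<omega> = y})"

definition disc_support :: "'a measure \<Rightarrow> ('a \<Rightarrow> 'y) \<Rightarrow> 'y set" where
  "disc_support M Y = {y. measure M {\<omega> \<in> space M. Y \<omega> = y} > 0}"

definition tv_cond :: "'a measure \<Rightarrow> 'a measure \<Rightarrow> 'a measure \<Rightarrow> ('a \<Rightarrow> 'y) \<Rightarrow> 'a \<Rightarrow> real" where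
  "tv_cond M F G Y \<omega> = (1/2) * (\<Sum>\<^sub>\<infinity>y\<in>disc_support M Y.
       \<bar>cond_prob_pt M F Y y \<omega> - cond_prob_pt M G Y y \<omega>\<bar>)"

definition ETV :: "'a measure \<Rightarrow> ('a \<Rightarrow> 'x) \<Rightarrow> 'x measure \<Rightarrow> ('a \<Rightarrow> 'y)
                  \<Rightarrow> ('a \<Rightarrow> 'z) \<Rightarrow> 'z measure \<Rightarrow> real" where
  "ETV M X MX Y Z MZ =
     (if finite (disc_support M Y) then 1 / (1 - 1 / real (card (disc_support M Y))) else 1) *
     (\<integral>\<omega>. tv_cond M (gen_sigma M (\<lambda>\<omega>. (X \<omega>, Z \<omega>)) (MX \<Otimes>\<^sub>M MZ)) (gen_sigma M Z MZ) Y \<omega> \<partial>M)"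

end

theory Submission
  imports Defs
begin

lemma setup_facts:
  fixes M :: "'a measure" and X :: "'a \<Rightarrow> 'x" and Z :: "'a \<Rightarrow> 'z"
  assumes "prob_space M" and "X \<in> measurable M MX" and "Z \<in> measurable M MZ"
  defines "F \<equiv> gen_sigma M (\<lambda>\<omega>. (X \<omega>, Z \<omega>)) (MX \<Otimes>\<^sub>M MZ)"
      and "G \<equiv> gen_sigma M Z MZ"
  shows "subalgebra M F" "subalgebra M G" "subalgebra F G"
    "sigma_finite_subalgebra M F" "sigma_finite_subalgebra M G"
    "(\<lambda>\<omega>. (X \<omega>, Z \<omega>)) \<in> measurable F (MX \<Otimes>\<^sub>M MZ)"
proof -
  interpret prob_space M by fact
  have XZ: "(\<lambda>\<omega>. (X \<omega>, Z \<omega>)) \<in> measurable M (MX \<Otimes>\<^sub>M MZ)" using assms by measurable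
  show XZF: "(\<lambda>\<omega>. (X \<omega>, Z \<omega>)) \<in> measurable F (MX \<Otimes>\<^sub>M MZ)"
    unfolding F_def gen_sigma_def
    by (rule measurable_vimage_algebra1) (use XZ in \<open>auto simp: measurable_def\<close>)
  show sF: "subalgebra M F" unfolding subalgebra_def F_def gen_sigma_def
    using sets_image_in_sets[OF refl XZ] by simp
  show sG: "subalgebra M G" unfolding subalgebra_def G_def gen_sigma_def
    using sets_image_in_sets[OF refl assms(3)] by simp
  have ZF: "Z \<in> measurable F MZ"
    using measurable_comp[OF XZF measurable_snd] by (simp add: comp_def)
  have "space F = space M" unfolding F_def gen_sigma_def by simp
  then show "subalgebra F G" unfolding subalgebra_def G_def gen_sigma_def
    using sets_image_in_sets[OF _ ZF] by simp
  show "sigma_finite_subalgebra M F"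
    by (rule finite_measure_subalgebra_is_sigma_finite)
       (simp add: finite_measure_subalgebra_def finite_measure_subalgebra_axioms_def sF finite_measure_axioms)
  show "sigma_finite_subalgebra M G"
    by (rule finite_measure_subalgebra_is_sigma_finite)
       (simp add: finite_measure_subalgebra_def finite_measure_subalgebra_axioms_def sG finite_measure_axioms)
qed

lemma cp_facts:
  fixes M F G :: "'a measure" and Y :: "'a \<Rightarrow> 'y"
  assumes P: "prob_space M" and SF: "sigma_finite_subalgebra M F" and SG: "sigma_finite_subalgebra M G"
    and GF: "subalgebra F G" and A: "{\<omega>\<in>space M. Y \<omega> = y} \<in> sets M"
  defines "p \<equiv> cond_prob_pt M F Y y" and "q \<equiv> cond_prob_pt M G Y y"
    and "I \<equiv> (indicator {\<omega>\<in>space M. Y \<omega> = y} :: 'a \<Rightarrow> real)"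
  shows "integrable M I" "integrable M p" "integrable M q"
    "AE \<omega> in M. 0 \<le> p \<omega> \<and> p \<omega> \<le> 1" "AE \<omega> in M. 0 \<le> q \<omega> \<and> q \<omega> \<le> 1"
    "(\<integral>\<omega>. p \<omega> \<partial>M) = measure M {\<omega>\<in>space M. Y \<omega> = y}"
    "(\<integral>\<omega>. q \<omega> \<partial>M) = measure M {\<omega>\<in>space M. Y \<omega> = y}"
    "integrable M (\<lambda>\<omega>. p \<omega> * q \<omega>)" "integrable M (\<lambda>\<omega>. q \<omega> * q \<omega>)"
    "(\<integral>\<omega>. p \<omega> * q \<omega> \<partial>M) = (\<integral>\<omega>. q \<omega> * q \<omega> \<partial>M)"
    "p \<in> borel_measurable M" "q \<in> borel_measurable M"
proof -
  interpret prob_space M by fact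
  interpret SF: sigma_finite_subalgebra M F by fact
  interpret SG: sigma_finite_subalgebra M G by fact
  show I: "integrable M I" unfolding I_def using A
    by (simp add: integrable_indicator_iff Int_absorb2 sets.sets_into_space emeasure_finite less_top[symmetric])
  have Im[measurable]: "I \<in> borel_measurable M" using I by auto
  show pi: "integrable M p" unfolding p_def cond_prob_pt_def using SF.real_cond_exp_int(1) I I_def by blast
  show qi: "integrable M q" unfolding q_def cond_prob_pt_def using SG.real_cond_exp_int(1) I I_def by blast
  show pm: "p \<in> borel_measurable M" "q \<in> borel_measurable M" using pi qi by auto
  have "AE \<omega> in M. 0 \<le> p \<omega>" unfolding p_def cond_prob_pt_def
    by (rule SF.real_cond_exp_pos) (use Im I_def in auto)
  moreover have "AE \<omega> in M. p \<omega> \<le> 1" unfolding p_def cond_prob_pt_def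
    by (rule SF.real_cond_exp_le_c) (use I I_def in \<open>auto simp: indicator_def\<close>)
  ultimately show "AE \<omega> in M. 0 \<le> p \<omega> \<and> p \<omega> \<le> 1" by eventually_elim auto
  have "AE \<omega> in M. 0 \<le> q \<omega>" unfolding q_def cond_prob_pt_def
    by (rule SG.real_cond_exp_pos) (use Im I_def in auto)
  moreover have qle: "AE \<omega> in M. q \<omega> \<le> 1" unfolding q_def cond_prob_pt_def
    by (rule SG.real_cond_exp_le_c) (use I I_def in \<open>auto simp: indicator_def\<close>)
  ultimately show qb: "AE \<omega> in M. 0 \<le> q \<omega> \<and> q \<omega> \<le> 1" by eventually_elim auto
  show "(\<integral>\<omega>. p \<omega> \<partial>M) = measure M {\<omega>\<in>space M. Y \<omega> = y}"
    unfolding p_def cond_prob_pt_def using SF.real_cond_exp_int(2)[OF I[unfolded I_def]]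
    by (simp add: Int_absorb2)
  show "(\<integral>\<omega>. q \<omega> \<partial>M) = measure M {\<omega>\<in>space M. Y \<omega> = y}"
    unfolding q_def cond_prob_pt_def using SG.real_cond_exp_int(2)[OF I[unfolded I_def]]
    by (simp add: Int_absorb2)
  have qG: "q \<in> borel_measurable G" unfolding q_def cond_prob_pt_def by simp
  have qF: "q \<in> borel_measurable F" by (rule measurable_from_subalg[OF GF qG])
  have qI: "integrable M (\<lambda>\<omega>. q \<omega> * I \<omega>)"
  proof (rule Bochner_Integration.integrable_bound[OF qi])
    show "(\<lambda>\<omega>. q \<omega> * I \<omega>) \<in> borel_measurable M" using pm(2) Im by (rule borel_measurable_times)
    show "AE \<omega> in M. norm (q \<omega> * I \<omega>) \<le> norm (q \<omega>)"
      by (auto simp: I_def indicator_def)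
  qed
  have 1: "integrable M (\<lambda>\<omega>. q \<omega> * p \<omega>)" "(\<integral>\<omega>. q \<omega> * p \<omega> \<partial>M) = (\<integral>\<omega>. q \<omega> * I \<omega> \<partial>M)"
    using SF.real_cond_exp_intg[OF qI qF Im] unfolding p_def cond_prob_pt_def I_def by auto
  have 2: "integrable M (\<lambda>\<omega>. q \<omega> * q \<omega>)" "(\<integral>\<omega>. q \<omega> * q \<omega> \<partial>M) = (\<integral>\<omega>. q \<omega> * I \<omega> \<partial>M)"
    using SG.real_cond_exp_intg[OF qI qG Im] unfolding q_def cond_prob_pt_def I_def by auto
  show "integrable M (\<lambda>\<omega>. p \<omega> * q \<omega>)" using 1 by (simp add: mult.commute)
  show "integrable M (\<lambda>\<omega>. q \<omega> * q \<omega>)" by fact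
  show "(\<integral>\<omega>. p \<omega> * q \<omega> \<partial>M) = (\<integral>\<omega>. q \<omega> * q \<omega> \<partial>M)" using 1 2 by (simp add: mult.commute)
qed

lemma sum_ind:
  assumes "finite S"
  shows "(\<Sum>y\<in>S. (indicator {\<omega>\<in>A. Y \<omega> = y} \<omega> :: real)) = (if \<omega> \<in> A \<and> Y \<omega> \<in> S then 1 else 0)"
proof -
  have "(\<Sum>y\<in>S. (indicator {\<omega>\<in>A. Y \<omega> = y} \<omega> :: real)) = (\<Sum>y\<in>S. if y = Y \<omega> then (if \<omega> \<in> A then 1 else 0) else 0)"
    by (rule sum.cong) (auto simp: indicator_def)
  then show ?thesis using assms by (simp add: sum.delta')
qed

lemma tv_pt:
  fixes a b :: real
  assumes "0 \<le> a" "a \<le> 1" "0 \<le> b" "b \<le> 1"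
  shows "1/2 * \<bar>a - b\<bar> \<le> a/2 + b/2 - a * b"
proof -
  have "a * b \<le> a" "a * b \<le> b" using assms by (auto intro: mult_left_le mult_left_le_one_le)
  then show ?thesis by (cases "a \<le> b") (auto simp: abs_if)
qed

lemma sq_pt:
  fixes a k :: real
  assumes "k > 0"
  shows "2 / k * a - 1 / k^2 \<le> a * a"
proof -
  have "0 \<le> (a - 1/k)^2" by simp
  then show ?thesis using assms by (simp add: power2_eq_square field_simps)
qed

lemma sum_abs_ind:
  assumes "finite S" "a \<in> S" "card S \<ge> 1"
  shows "(\<Sum>y\<in>S. \<bar>(if y = a then 1 else 0) - 1 / real (card S)\<bar>) = 2 * (1 - 1 / real (card S))"
proof -
  let ?n = "real (card S)"
  have n1: "?n \<ge> 1" using assms by simp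
  have "(\<Sum>y\<in>S. \<bar>(if y = a then 1 else 0) - 1 / ?n\<bar>) =
      \<bar>1 - 1 / ?n\<bar> + (\<Sum>y\<in>S - {a}. \<bar>(if y = a then 1 else 0) - 1 / ?n\<bar>)"
    by (subst sum.remove[OF assms(1,2)]) simp
  also have "(\<Sum>y\<in>S - {a}. \<bar>(if y = a then 1 else 0) - 1 / ?n\<bar>) = (\<Sum>y\<in>S - {a}. 1 / ?n)"
    by (intro sum.cong) auto
  also have "\<dots> = (?n - 1) / ?n" using assms by (simp add: of_nat_diff)
  also have "\<bar>1 - 1 / ?n\<bar> = 1 - 1 / ?n" using n1 by simp
  finally have e: "(\<Sum>y\<in>S. \<bar>(if y = a then 1 else 0) - 1 / ?n\<bar>) = (1 - 1 / ?n) + (?n - 1) / ?n" .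
  have "(?n - 1) / ?n = 1 - 1 / ?n" using n1 by (simp add: diff_divide_distrib)
  then show ?thesis using e by simp
qed

theorem lemma1:
  fixes M :: "'a measure" and X :: "'a \<Rightarrow> 'x" and Y :: "'a \<Rightarrow> 'y" and Z :: "'a \<Rightarrow> 'z"
    and MX :: "'x measure" and MY :: "'y measure" and MZ :: "'z measure" and Ycal :: "'y set"
  assumes "prob_space M"
    and "X \<in> measurable M MX" and "Y \<in> measurable M MY" and "Z \<in> measurable M MZ"
    and "countable Ycal"
    and "\<And>y. y \<in> Ycal \<Longrightarrow> {y} \<in> sets MY"
    and "measure M {\<omega> \<in> space M. Y \<omega> \<in> Ycal} = 1"
  shows "(0 \<le> ETV M X MX Y Z MZ \<and> ETV M X MX Y Z MZ \<le> 1) \<and>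
        ((finite Ycal \<and> card Ycal \<ge> 2 \<and>
         (\<exists>g \<in> measurable (MX \<Otimes>\<^sub>M MZ) MY. AE \<omega> in M. Y \<omega> = g (X \<omega>, Z \<omega>)) \<and>
         (\<forall>y \<in> Ycal. AE \<omega> in M. cond_prob_pt M (gen_sigma M Z MZ) Y y \<omega> = 1 / real (card Ycal)))
         \<longrightarrow> ETV M X MX Y Z MZ = 1)"
proof -
  interpret prob_space M by fact
  define F where "F = gen_sigma M (\<lambda>\<omega>. (X \<omega>, Z \<omega>)) (MX \<Otimes>\<^sub>M MZ)"
  define G where "G = gen_sigma M Z MZ"
  note st = setup_facts[OF assms(1,2,4), folded F_def G_def]
  interpret SF: sigma_finite_subalgebra M F by (rule st(4))
  interpret SG: sigma_finite_subalgebra M G by (rule st(5))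
  define D where "D = disc_support M Y"
  define p where "p = (\<lambda>y. cond_prob_pt M F Y y)"
  define q where "q = (\<lambda>y. cond_prob_pt M G Y y)"
  define Ind where "Ind = (\<lambda>y. (indicator {\<omega>\<in>space M. Y \<omega> = y} :: 'a \<Rightarrow> real))"
  define tv where "tv = tv_cond M F G Y"
  define c where "c = (if finite D then 1 / (1 - 1 / real (card D)) else 1)"
  have ETV: "ETV M X MX Y Z MZ = c * (\<integral>\<omega>. tv \<omega> \<partial>M)"
    unfolding ETV_def c_def D_def tv_def F_def G_def by simp
  have tv_eq: "tv \<omega> = 1/2 * (\<Sum>\<^sub>\<infinity>y\<in>D. \<bar>p y \<omega> - q y \<omega>\<bar>)" for \<omega>
    unfolding tv_def tv_cond_def D_def p_def q_def by simp
  have Dsets: "{\<omega>\<in>space M. Y \<omega> = y} \<in> sets M" if "y \<in> D" for y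
    using that measure_notin_sets unfolding D_def disc_support_def by force
  have Dpos: "measure M {\<omega>\<in>space M. Y \<omega> = y} > 0" if "y \<in> D" for y
    using that unfolding D_def disc_support_def by simp
  have Ysets: "{\<omega>\<in>space M. Y \<omega> = y} \<in> sets M" if "y \<in> Ycal" for y
  proof -
    have "{\<omega>\<in>space M. Y \<omega> = y} = Y -` {y} \<inter> space M" by auto
    then show ?thesis using measurable_sets[OF assms(3) assms(6)[OF that]] by simp
  qed
  have Ycalset: "{\<omega>\<in>space M. Y \<omega> \<in> Ycal} \<in> sets M"
    using assms(7) measure_notin_sets by force
  have compl0: "measure M (space M - {\<omega>\<in>space M. Y \<omega> \<in> Ycal}) = 0"
    using prob_compl[OF Ycalset] assms(7) by simp
  have DY: "D \<subseteq> Ycal"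
  proof
    fix y assume y: "y \<in> D"
    show "y \<in> Ycal"
    proof (rule ccontr)
      assume "y \<notin> Ycal"
      then have "{\<omega>\<in>space M. Y \<omega> = y} \<subseteq> space M - {\<omega>\<in>space M. Y \<omega> \<in> Ycal}" by auto
      then have "measure M {\<omega>\<in>space M. Y \<omega> = y} \<le> 0"
        using finite_measure_mono[of _ "space M - {\<omega>\<in>space M. Y \<omega> \<in> Ycal}"] compl0 Ycalset by auto
      then show False using Dpos[OF y] by simp
    qed
  qed
  have cD: "countable D" using DY assms(5) countable_subset by blast
  note cp = cp_facts[OF assms(1) st(4) st(5) st(3) Dsets, folded p_def q_def Ind_def]
  have c_nn: "0 \<le> c"
  proof -
    have "1 / real (card D) \<le> 1" by (cases "card D") auto
    then show ?thesis unfolding c_def by auto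
  qed
  have tv_nn: "0 \<le> tv \<omega>" for \<omega> unfolding tv_eq by (auto intro: infsum_nonneg)
  have int_nn: "0 \<le> (\<integral>\<omega>. tv \<omega> \<partial>M)" using tv_nn by (auto intro: integral_nonneg_AE)
  have AEY: "AE \<omega> in M. Y \<omega> \<in> Ycal"
  proof -
    have "space M - {\<omega>\<in>space M. Y \<omega> \<in> Ycal} \<in> null_sets M"
      using compl0 Ycalset by (intro null_setsI) (auto simp: emeasure_eq_measure)
    from AE_not_in[OF this] show ?thesis using AE_space by eventually_elim auto
  qed
  have AEYD: "AE \<omega> in M. Y \<omega> \<in> D"
  proof -
    have "AE \<omega> in M. \<forall>y\<in>Ycal - D. \<omega> \<notin> {\<omega>\<in>space M. Y \<omega> = y}"
    proof (rule AE_ball_countable')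
      fix y assume y: "y \<in> Ycal - D"
      have "measure M {\<omega>\<in>space M. Y \<omega> = y} = 0"
        using y measure_nonneg[of M "{\<omega>\<in>space M. Y \<omega> = y}"] unfolding D_def disc_support_def by auto
      then have "{\<omega>\<in>space M. Y \<omega> = y} \<in> null_sets M"
        using Ysets[of y] y by (intro null_setsI) (auto simp: emeasure_eq_measure)
      then show "AE \<omega> in M. \<omega> \<notin> {\<omega>\<in>space M. Y \<omega> = y}" by (rule AE_not_in)
    qed (use assms(5) in auto)
    then show ?thesis using AEY AE_space by eventually_elim auto
  qed
  have Iint: "integrable M (Ind y)" if "y \<in> D" for y unfolding Ind_def using cp(1)[OF that] .
  have upper: "c * (\<integral>\<omega>. tv \<omega> \<partial>M) \<le> 1"
  proof (cases "finite D")
    case False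
    then have c1: "c = 1" unfolding c_def by simp
    define FS where "FS = {S. finite S \<and> S \<subseteq> D}"
    have cFS: "countable FS" unfolding FS_def using cD by (rule countable_Collect_finite_subset)
    define fI where "fI = (\<lambda>i. if i \<in> D then Ind i else (\<lambda>_. 0))"
    have fIi: "integrable M (fI i)" for i unfolding fI_def using Iint by auto
    have fIs: "(\<Sum>i\<in>S. fI i \<omega>) \<le> 1" if "S \<in> FS" for S \<omega>
    proof -
      have "(\<Sum>i\<in>S. fI i \<omega>) = (\<Sum>i\<in>S. Ind i \<omega>)"
        using that unfolding FS_def fI_def by (intro sum.cong) auto
      also have "\<dots> \<le> 1" unfolding Ind_def using that unfolding FS_def by (simp add: sum_ind)
      finally show ?thesis .
    qed
    have AEp: "AE \<omega> in M. \<forall>S\<in>FS. (\<Sum>y\<in>S. p y \<omega>) \<le> 1"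
    proof (rule AE_ball_countable'[OF _ cFS])
      fix S assume S: "S \<in> FS"
      have 1: "AE \<omega> in M. real_cond_exp M F (\<lambda>x. \<Sum>i\<in>S. fI i x) \<omega> = (\<Sum>i\<in>S. real_cond_exp M F (fI i) \<omega>)"
        by (rule SF.real_cond_exp_sum) (rule fIi)
      have 2: "AE \<omega> in M. real_cond_exp M F (\<lambda>x. \<Sum>i\<in>S. fI i x) \<omega> \<le> 1"
        by (rule SF.real_cond_exp_le_c) (use fIi fIs[OF S] in auto)
      have 3: "(\<Sum>i\<in>S. real_cond_exp M F (fI i) \<omega>) = (\<Sum>y\<in>S. p y \<omega>)" for \<omega>
        using S unfolding FS_def fI_def p_def cond_prob_pt_def Ind_def by (intro sum.cong) auto
      show "AE \<omega> in M. (\<Sum>y\<in>S. p y \<omega>) \<le> 1" using 1 2 by eventually_elim (use 3 in auto)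
    qed
    have AEq: "AE \<omega> in M. \<forall>S\<in>FS. (\<Sum>y\<in>S. q y \<omega>) \<le> 1"
    proof (rule AE_ball_countable'[OF _ cFS])
      fix S assume S: "S \<in> FS"
      have 1: "AE \<omega> in M. real_cond_exp M G (\<lambda>x. \<Sum>i\<in>S. fI i x) \<omega> = (\<Sum>i\<in>S. real_cond_exp M G (fI i) \<omega>)"
        by (rule SG.real_cond_exp_sum) (rule fIi)
      have 2: "AE \<omega> in M. real_cond_exp M G (\<lambda>x. \<Sum>i\<in>S. fI i x) \<omega> \<le> 1"
        by (rule SG.real_cond_exp_le_c) (use fIi fIs[OF S] in auto)
      have 3: "(\<Sum>i\<in>S. real_cond_exp M G (fI i) \<omega>) = (\<Sum>y\<in>S. q y \<omega>)" for \<omega>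
        using S unfolding FS_def fI_def q_def cond_prob_pt_def Ind_def by (intro sum.cong) auto
      show "AE \<omega> in M. (\<Sum>y\<in>S. q y \<omega>) \<le> 1" using 1 2 by eventually_elim (use 3 in auto)
    qed
    have AEpos: "AE \<omega> in M. \<forall>y\<in>D. 0 \<le> p y \<omega> \<and> 0 \<le> q y \<omega>"
    proof (rule AE_ball_countable'[OF _ cD])
      fix y assume y: "y \<in> D"
      show "AE \<omega> in M. 0 \<le> p y \<omega> \<and> 0 \<le> q y \<omega>" using cp(4)[OF y] cp(5)[OF y] by eventually_elim auto
    qed
    have AEtv: "AE \<omega> in M. tv \<omega> \<le> 1"
      using AEp AEq AEpos
    proof eventually_elim
      case (elim \<omega>)
      have "(\<Sum>\<^sub>\<infinity>y\<in>D. \<bar>p y \<omega> - q y \<omega>\<bar>) \<le> 2"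
      proof (cases "(\<lambda>y. \<bar>p y \<omega> - q y \<omega>\<bar>) summable_on D")
        case True
        show ?thesis
        proof (rule infsum_le_finite_sums[OF True])
          fix S assume S: "finite S" "S \<subseteq> D"
          then have SF: "S \<in> FS" unfolding FS_def by simp
          have "(\<Sum>y\<in>S. \<bar>p y \<omega> - q y \<omega>\<bar>) \<le> (\<Sum>y\<in>S. p y \<omega> + q y \<omega>)"
            using elim(3) S by (intro sum_mono) (smt (verit) subsetD)
          also have "\<dots> = (\<Sum>y\<in>S. p y \<omega>) + (\<Sum>y\<in>S. q y \<omega>)" by (simp add: sum.distrib)
          also have "\<dots> \<le> 2" using elim(1,2) SF by fastforce
          finally show "(\<Sum>y\<in>S. \<bar>p y \<omega> - q y \<omega>\<bar>) \<le> 2" .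
        qed
      next
        case False
        then show ?thesis by (simp add: infsum_not_exists)
      qed
      then show ?case unfolding tv_eq by simp
    qed
    have "(\<integral>\<omega>. tv \<omega> \<partial>M) \<le> (\<integral>\<omega>. 1 \<partial>M)"
      by (rule integral_mono_AE') (use AEtv in auto)
    then show ?thesis using c1 prob_space by simp
  next
    case True
    define k where "k = card D"
    show ?thesis
    proof (cases "k \<le> 1")
      case True
      then consider "k = 0" | "k = 1" by linarith
      then show ?thesis
      proof cases
        case 1
        then have "D = {}" using \<open>finite D\<close> unfolding k_def by simp
        then have "tv = (\<lambda>_. 0)" by (simp add: tv_eq fun_eq_iff)
        then show ?thesis by simp
      next
        case 2
        then have "c = 0" unfolding c_def k_def using \<open>finite D\<close> by simp
        then show ?thesis by simp
      qed
    next
      case False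
      then have k2: "k \<ge> 2" by simp
      have kpos: "real k > 0" using k2 by simp
      have AEb: "AE \<omega> in M. \<forall>y\<in>D. (0 \<le> p y \<omega> \<and> p y \<omega> \<le> 1) \<and> (0 \<le> q y \<omega> \<and> q y \<omega> \<le> 1)"
      proof (rule AE_finite_allI[OF \<open>finite D\<close>])
        fix y assume y: "y \<in> D"
        show "AE \<omega> in M. (0 \<le> p y \<omega> \<and> p y \<omega> \<le> 1) \<and> (0 \<le> q y \<omega> \<and> q y \<omega> \<le> 1)"
          using cp(4)[OF y] cp(5)[OF y] by eventually_elim auto
      qed
      define h where "h = (\<lambda>\<omega>. \<Sum>y\<in>D. p y \<omega> / 2 + q y \<omega> / 2 - p y \<omega> * q y \<omega>)"
      have tvh: "AE \<omega> in M. tv \<omega> \<le> h \<omega>" using AEb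
      proof eventually_elim
        case (elim \<omega>)
        have "tv \<omega> = (\<Sum>y\<in>D. 1/2 * \<bar>p y \<omega> - q y \<omega>\<bar>)"
          unfolding tv_eq using \<open>finite D\<close> by (simp add: sum_distrib_left)
        also have "\<dots> \<le> h \<omega>" unfolding h_def
          using elim by (intro sum_mono tv_pt) auto
        finally show ?case .
      qed
      have hnn: "AE \<omega> in M. 0 \<le> h \<omega>" using tvh by eventually_elim (use tv_nn in \<open>smt (verit)\<close>)
      have hint: "integrable M h" unfolding h_def
      proof (rule Bochner_Integration.integrable_sum)
        fix y assume y: "y \<in> D"
        show "integrable M (\<lambda>\<omega>. p y \<omega> / 2 + q y \<omega> / 2 - p y \<omega> * q y \<omega>)"
          using cp(2,3,8)[OF y] by (intro Bochner_Integration.integrable_diff Bochner_Integration.integrable_add integrable_divide_zero) auto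
      qed
      have inth: "(\<integral>\<omega>. h \<omega> \<partial>M) = (\<Sum>y\<in>D. measure M {\<omega>\<in>space M. Y \<omega> = y} - (\<integral>\<omega>. q y \<omega> * q y \<omega> \<partial>M))"
        unfolding h_def
      proof (subst Bochner_Integration.integral_sum)
        fix y assume y: "y \<in> D"
        show "integrable M (\<lambda>\<omega>. p y \<omega> / 2 + q y \<omega> / 2 - p y \<omega> * q y \<omega>)"
          using cp(2,3,8)[OF y] by (intro Bochner_Integration.integrable_diff Bochner_Integration.integrable_add integrable_divide_zero) auto
      next
        show "(\<Sum>y\<in>D. \<integral>\<omega>. p y \<omega> / 2 + q y \<omega> / 2 - p y \<omega> * q y \<omega> \<partial>M) =
          (\<Sum>y\<in>D. measure M {\<omega>\<in>space M. Y \<omega> = y} - (\<integral>\<omega>. q y \<omega> * q y \<omega> \<partial>M))"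
        proof (rule sum.cong[OF refl])
          fix y assume y: "y \<in> D"
          have i1: "integrable M (\<lambda>\<omega>. p y \<omega> / 2)" "integrable M (\<lambda>\<omega>. q y \<omega> / 2)"
            using cp(2,3)[OF y] by auto
          have i2: "integrable M (\<lambda>\<omega>. p y \<omega> / 2 + q y \<omega> / 2)" using i1 by auto
          show "(\<integral>\<omega>. p y \<omega> / 2 + q y \<omega> / 2 - p y \<omega> * q y \<omega> \<partial>M) =
            measure M {\<omega>\<in>space M. Y \<omega> = y} - (\<integral>\<omega>. q y \<omega> * q y \<omega> \<partial>M)"
            using cp(6,7,8,10)[OF y] i1 i2
            by (simp add: Bochner_Integration.integral_diff Bochner_Integration.integral_add)
        qed
      qed
      have qq: "2 / real k * measure M {\<omega>\<in>space M. Y \<omega> = y} - 1 / (real k)^2 \<le> (\<integral>\<omega>. q y \<omega> * q y \<omega> \<partial>M)"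
        if y: "y \<in> D" for y
      proof -
        have "(\<integral>\<omega>. 2 / real k * q y \<omega> - 1 / (real k)^2 \<partial>M) \<le> (\<integral>\<omega>. q y \<omega> * q y \<omega> \<partial>M)"
          by (rule integral_mono) (use cp[OF y] sq_pt[OF kpos] in auto)
        moreover have "(\<integral>\<omega>. 2 / real k * q y \<omega> - 1 / (real k)^2 \<partial>M) = 2 / real k * measure M {\<omega>\<in>space M. Y \<omega> = y} - 1 / (real k)^2"
          using cp[OF y] prob_space by (simp add: integral_diff)
        ultimately show ?thesis by simp
      qed
      have sumP: "(\<Sum>y\<in>D. measure M {\<omega>\<in>space M. Y \<omega> = y}) = 1"
      proof -
        have "(\<Sum>y\<in>D. measure M {\<omega>\<in>space M. Y \<omega> = y}) = (\<Sum>y\<in>D. \<integral>\<omega>. Ind y \<omega> \<partial>M)"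
          unfolding Ind_def by (intro sum.cong) (auto simp: Int_absorb2)
        also have "\<dots> = (\<integral>\<omega>. (\<Sum>y\<in>D. Ind y \<omega>) \<partial>M)"
          by (rule Bochner_Integration.integral_sum[symmetric]) (rule Iint)
        also have "\<dots> = (\<integral>\<omega>. 1 \<partial>M)"
        proof (rule integral_cong_AE)
          show "(\<lambda>\<omega>. \<Sum>y\<in>D. Ind y \<omega>) \<in> borel_measurable M"
            using Iint by (intro borel_measurable_sum) auto
          show "AE \<omega> in M. (\<Sum>y\<in>D. Ind y \<omega>) = 1"
            using AEYD AE_space by eventually_elim (simp add: Ind_def sum_ind[OF \<open>finite D\<close>])
        qed simp
        finally show ?thesis using prob_space by simp
      qed
      have "(\<integral>\<omega>. tv \<omega> \<partial>M) \<le> (\<integral>\<omega>. h \<omega> \<partial>M)"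
        by (rule integral_mono_AE'[OF hint tvh hnn])
      also have "\<dots> \<le> (\<Sum>y\<in>D. measure M {\<omega>\<in>space M. Y \<omega> = y} - (2 / real k * measure M {\<omega>\<in>space M. Y \<omega> = y} - 1 / (real k)^2))"
        unfolding inth by (intro sum_mono) (smt (verit) qq)
      also have "\<dots> = 1 - 2 / real k + real k / (real k)^2"
        using sumP by (simp add: sum_subtractf sum_divide_distrib[symmetric] sum_distrib_left[symmetric] k_def)
      also have "\<dots> = 1 - 1 / real k" using kpos by (simp add: power2_eq_square field_simps)
      finally have "(\<integral>\<omega>. tv \<omega> \<partial>M) \<le> 1 - 1 / real k" .
      moreover have "c = 1 / (1 - 1 / real k)" unfolding c_def k_def using \<open>finite D\<close> by simp
      moreover have "1 - 1 / real k > 0" using k2 by simp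
      ultimately show ?thesis by (simp add: divide_le_eq)
    qed
  qed
  have second: "ETV M X MX Y Z MZ = 1"
    if H: "finite Ycal" "card Ycal \<ge> 2" "\<exists>g \<in> measurable (MX \<Otimes>\<^sub>M MZ) MY. AE \<omega> in M. Y \<omega> = g (X \<omega>, Z \<omega>)"
      "\<forall>y \<in> Ycal. AE \<omega> in M. cond_prob_pt M (gen_sigma M Z MZ) Y y \<omega> = 1 / real (card Ycal)"
  proof -
    from H(3) obtain g where g: "g \<in> measurable (MX \<Otimes>\<^sub>M MZ) MY"
      and AEg: "AE \<omega> in M. Y \<omega> = g (X \<omega>, Z \<omega>)" by blast
    define n where "n = card Ycal"
    have n2: "n \<ge> 2" using H(2) n_def by simp
    have qn: "AE \<omega> in M. q y \<omega> = 1 / real n" if "y \<in> Ycal" for y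
      using H(4) that unfolding q_def G_def n_def by blast
    have YcD: "Ycal \<subseteq> D"
    proof
      fix y assume y: "y \<in> Ycal"
      have Ii: "integrable M (Ind y)" unfolding Ind_def using Ysets[OF y]
        by (simp add: integrable_indicator_iff Int_absorb2 sets.sets_into_space emeasure_finite less_top[symmetric])
      have "measure M {\<omega>\<in>space M. Y \<omega> = y} = (\<integral>\<omega>. Ind y \<omega> \<partial>M)"
        unfolding Ind_def by (simp add: Int_absorb2)
      also have "\<dots> = (\<integral>\<omega>. q y \<omega> \<partial>M)"
        using SG.real_cond_exp_int(2)[OF Ii] unfolding q_def cond_prob_pt_def Ind_def by simp
      also have "\<dots> = (\<integral>\<omega>. 1 / real n \<partial>M)"
        by (rule integral_cong_AE) (use qn[OF y] in \<open>auto simp: q_def cond_prob_pt_def\<close>)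
      also have "\<dots> = 1 / real n" using prob_space by simp
      finally have "measure M {\<omega>\<in>space M. Y \<omega> = y} > 0" using n2 by simp
      then show "y \<in> D" unfolding D_def disc_support_def by simp
    qed
    have DYc: "D = Ycal" using DY YcD by blast
    have XZF: "(\<lambda>\<omega>. (X \<omega>, Z \<omega>)) \<in> measurable F (MX \<Otimes>\<^sub>M MZ)" by (rule st(6))
    have gF: "(\<lambda>\<omega>. g (X \<omega>, Z \<omega>)) \<in> measurable F MY"
      using measurable_comp[OF XZF g] by (simp add: comp_def)
    have spF: "space F = space M" unfolding F_def gen_sigma_def by simp
    have pI: "AE \<omega> in M. p y \<omega> = Ind y \<omega>" if y: "y \<in> Ycal" for y
    proof -
      define J where "J = (indicator {\<omega>\<in>space M. g (X \<omega>, Z \<omega>) = y} :: 'a \<Rightarrow> real)"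
      have "{\<omega>\<in>space M. g (X \<omega>, Z \<omega>) = y} = (\<lambda>\<omega>. g (X \<omega>, Z \<omega>)) -` {y} \<inter> space F"
        using spF by auto
      then have JsF: "{\<omega>\<in>space M. g (X \<omega>, Z \<omega>) = y} \<in> sets F"
        using measurable_sets[OF gF assms(6)[OF y]] by simp
      have JF: "J \<in> borel_measurable F" unfolding J_def using JsF by simp
      have JM: "J \<in> borel_measurable M" by (rule measurable_from_subalg[OF st(1) JF])
      have JsM: "{\<omega>\<in>space M. g (X \<omega>, Z \<omega>) = y} \<in> sets M"
        using JsF st(1) unfolding subalgebra_def by auto
      have Ji: "integrable M J" unfolding J_def using JsM
        by (simp add: integrable_indicator_iff Int_absorb2 sets.sets_into_space emeasure_finite less_top[symmetric])
      have IM: "Ind y \<in> borel_measurable M" unfolding Ind_def using Ysets[OF y] by simp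
      have IJ: "AE \<omega> in M. Ind y \<omega> = J \<omega>" using AEg
        by eventually_elim (auto simp: Ind_def J_def indicator_def)
      have 1: "AE \<omega> in M. real_cond_exp M F (Ind y) \<omega> = real_cond_exp M F J \<omega>"
        by (rule SF.real_cond_exp_cong[OF IJ IM JM])
      have 2: "AE \<omega> in M. real_cond_exp M F J \<omega> = J \<omega>"
        by (rule SF.real_cond_exp_F_meas[OF Ji JF])
      show ?thesis using 1 2 IJ unfolding p_def cond_prob_pt_def Ind_def
        by eventually_elim simp
    qed
    have AEall: "AE \<omega> in M. \<forall>y\<in>Ycal. p y \<omega> = Ind y \<omega> \<and> q y \<omega> = 1 / real n"
    proof (rule AE_finite_allI[OF H(1)])
      fix y assume "y \<in> Ycal"
      then show "AE \<omega> in M. p y \<omega> = Ind y \<omega> \<and> q y \<omega> = 1 / real n"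
        using pI qn by (auto intro: eventually_conj)
    qed
    have tvf: "tv = (\<lambda>\<omega>. 1/2 * (\<Sum>y\<in>D. \<bar>p y \<omega> - q y \<omega>\<bar>))"
      using DYc H(1) by (simp add: fun_eq_iff tv_eq)
    have tvm: "tv \<in> borel_measurable M" unfolding tvf
      using cp(11,12) by (intro borel_measurable_times borel_measurable_sum borel_measurable_abs borel_measurable_diff) auto
    have "AE \<omega> in M. tv \<omega> = 1 - 1 / real n"
      using AEall AEY AE_space
    proof eventually_elim
      case (elim \<omega>)
      have "(\<Sum>y\<in>D. \<bar>p y \<omega> - q y \<omega>\<bar>) = (\<Sum>y\<in>Ycal. \<bar>(if y = Y \<omega> then 1 else 0) - 1 / real (card Ycal)\<bar>)"
        unfolding DYc using elim by (intro sum.cong) (auto simp: Ind_def indicator_def n_def)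
      also have "\<dots> = 2 * (1 - 1 / real n)"
        using sum_abs_ind[OF H(1) elim(2)] n2 unfolding n_def by simp
      finally show ?case unfolding tvf by simp
    qed
    then have "(\<integral>\<omega>. tv \<omega> \<partial>M) = (\<integral>\<omega>. 1 - 1 / real n \<partial>M)"
      by (intro integral_cong_AE tvm) auto
    also have "\<dots> = 1 - 1 / real n" using prob_space by simp
    finally have itv: "(\<integral>\<omega>. tv \<omega> \<partial>M) = 1 - 1 / real n" .
    have "c = 1 / (1 - 1 / real n)" unfolding c_def using DYc H(1) n_def by simp
    moreover have "1 - 1 / real n \<noteq> 0" using n2 by simp
    ultimately show ?thesis using ETV itv by simp
  qed
  show ?thesis using ETV c_nn int_nn upper second by auto
qed

end
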